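(* Let $A$ be an infinite set of positive integers with $1\in A$. Then $\mathrm{Single}(n,A)$ and $\mathrm{Total}(n,A)$ are finite for all $n\ge1$ (and hence, for every $n$, every play of $\mathrm{AGG}(n,A)$ ends after finitely many steps) if and only if the differences between consecutive elements of $A$ (listed in increasing order) are unbounded.
   Context: For an integer $n\ge 0$ and a set $A$ of positive integers with $1\in A$, the abstract generalized 2048 game $\mathrm{AGG}(n,A)$ is played on $n$ indistinguishable cells. A position assigns to each cell either nothing (the cell is empty) or a tile carrying a value in $A$. The initial position has all cells empty. A step, which can be performed from any position having at least one empty cell, consists of: (i) placing a new tile of value $1$ into a chosen empty cell; then (ii) optionally choosing any collection of pairwise disjoint sets of nonempty cells such that the sum of the tile values in each chosen set belongs to $A$, and merging each chosen set into a single tile, whose value is that sum, placed in one cell of the set, the other cells of the set becoming empty. The game ends when, after a step, all cells are nonempty (no further step is then possible). A position is reachable if it can be obtained from the initial position by a finite sequence of steps; its total value is the sum of its tile values. For $n\ge1$, $\mathrm{Single}(n,A)$ is the supremum (possibly $\infty$) of the values $x\in A$ such that the position of $\mathrm{AGG}(n,A)$ with one tile of value $x$ and $n-1$ empty cells is reachable, and $\mathrm{Total}(n,A)$ is the supremum (possibly $\infty$) of the total values of reachable positions of $\mathrm{AGG}(n,A)$. *)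

theory Defs
  imports Main "HOL-Library.Multiset" "HOL-Library.Extended_Nat" "HOL-Library.Infinite_Set"
begin

text \<open>Since the n cells are indistinguishable, a position is the multiset of
values of the tiles on the nonempty cells; its size (number of nonempty cells)
is at most n.\<close>

definition merge_step :: "nat set \<Rightarrow> nat multiset \<Rightarrow> nat multiset \<Rightarrow> bool" where
  "merge_step A M M' \<longleftrightarrow>
     (\<exists>Ps R. M = sum_list Ps + R \<and>
             (\<forall>P \<in> set Ps. P \<noteq> {#} \<and> sum_mset P \<in> A) \<and>
             M' = R + mset (map sum_mset Ps))"

definition agg_step :: "nat \<Rightarrow> nat set \<Rightarrow> nat multiset \<Rightarrow> nat multiset \<Rightarrow> bool" where
  "agg_step n A M M' \<longleftrightarrow> size M < n \<and> merge_step A (M + {#1#}) M'"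

inductive agg_reachable :: "nat \<Rightarrow> nat set \<Rightarrow> nat multiset \<Rightarrow> bool"
  for n :: nat and A :: "nat set" where
  init: "agg_reachable n A {#}"
| step: "agg_reachable n A M \<Longrightarrow> agg_step n A M M' \<Longrightarrow> agg_reachable n A M'"

definition Single :: "nat \<Rightarrow> nat set \<Rightarrow> enat" where
  "Single n A = Sup (enat ` {x \<in> A. agg_reachable n A {#x#}})"

definition Total :: "nat \<Rightarrow> nat set \<Rightarrow> enat" where
  "Total n A = Sup ((\<lambda>M. enat (sum_mset M)) ` {M. agg_reachable n A M})"

end

theory Submission
  imports Defs
begin

inductive inv :: "nat \<Rightarrow> nat set \<Rightarrow> nat multiset \<Rightarrow> bool" for n A where
  i0: "inv n A {#}"
| istep: "inv n A M \<Longrightarrow> agg_step n A M M' \<Longrightarrow> inv n A M'"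
| isub: "inv n A M \<Longrightarrow> M' \<subseteq># M \<Longrightarrow> inv n A M'"

lemma reach_inv: "agg_reachable n A M \<Longrightarrow> inv n A M"
  by (induction rule: agg_reachable.induct) (auto intro: inv.intros)

lemma inv0: "inv 0 A M \<Longrightarrow> M = {#}"
  by (induction rule: inv.induct) (auto simp: agg_step_def)

lemma split_mem_list:
  assumes "x \<in># sum_list Ps"
  shows "\<exists>Ps1 P Ps2. Ps = Ps1 @ P # Ps2 \<and> x \<in># P"
  using assms
proof (induction Ps)
  case Nil then show ?case by simp
next
  case (Cons Q Ps)
  show ?case
  proof (cases "x \<in># Q")
    case True then show ?thesis by (intro exI[of _ "[]"]) auto
  next
    case False
    with Cons.prems have "x \<in># sum_list Ps" by simp
    from Cons.IH[OF this] obtain Ps1 P Ps2 where "Ps = Ps1 @ P # Ps2" "x \<in># P" by blast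
    then show ?thesis by (intro exI[of _ "Q # Ps1"]) auto
  qed
qed

lemma step_decomp:
  assumes st: "agg_step (Suc n) A (add_mset x R) M'"
  shows "(\<exists>R'. M' = add_mset x R' \<and> agg_step n A R R') \<or>
         (\<exists>G R2 R4. M' = add_mset (x + sum_mset G) R2 \<and> agg_step n A R R4 \<and> R2 \<subseteq># R4
            \<and> x + sum_mset G \<in> A \<and> sum_mset G \<le> sum_mset R + 1)"
proof -
  from st have sz: "size R < n" by (simp add: agg_step_def)
  from st obtain Ps Rest where
    e1: "add_mset x R + {#1#} = sum_list Ps + Rest" and
    pP: "\<forall>P \<in> set Ps. P \<noteq> {#} \<and> sum_mset P \<in> A" and
    e2: "M' = Rest + mset (map sum_mset Ps)"
    by (auto simp: agg_step_def merge_step_def)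
  have xin: "x \<in># sum_list Ps + Rest" using e1[symmetric] by simp
  show ?thesis
  proof (cases "x \<in># Rest")
    case True
    then obtain Rest' where r: "Rest = add_mset x Rest'" by (metis multi_member_split)
    have "R + {#1#} = sum_list Ps + Rest'" using e1 r by simp
    then have "agg_step n A R (Rest' + mset (map sum_mset Ps))"
      using sz pP by (auto simp: agg_step_def merge_step_def)
    moreover have "M' = add_mset x (Rest' + mset (map sum_mset Ps))" using e2 r by simp
    ultimately show ?thesis by blast
  next
    case False
    with xin have "x \<in># sum_list Ps" by simp
    from split_mem_list[OF this] obtain Ps1 P Ps2 where
      ps: "Ps = Ps1 @ P # Ps2" and xP: "x \<in># P" by blast
    obtain G where pg: "P = add_mset x G" using xP by (metis multi_member_split)
    let ?Qs = "Ps1 @ Ps2"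
    have e3: "R + {#1#} = sum_list ?Qs + (Rest + G)"
      using e1 ps pg by (simp add: ac_simps)
    have "agg_step n A R ((Rest + G) + mset (map sum_mset ?Qs))"
      using sz pP ps e3 unfolding agg_step_def merge_step_def
      by (intro conjI exI[of _ ?Qs] exI[of _ "Rest + G"]) auto
    moreover have "M' = add_mset (x + sum_mset G) (Rest + mset (map sum_mset ?Qs))"
      using e2 ps pg by (simp add: ac_simps)
    moreover have "Rest + mset (map sum_mset ?Qs) \<subseteq># (Rest + G) + mset (map sum_mset ?Qs)"
      by simp
    moreover have "x + sum_mset G \<in> A"
    proof -
      have "P \<in> set Ps" using ps by simp
      then have "sum_mset P \<in> A" using pP by blast
      then show ?thesis using pg by simp
    qed
    moreover have "sum_mset G \<le> sum_mset R + 1"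
    proof -
      have "sum_mset (R + {#1#}) = sum_mset (sum_list ?Qs + (Rest + G))" by (simp only: e3)
      then show ?thesis by simp
    qed
    ultimately show ?thesis by blast
  qed
qed

lemma mem_le_sum: "(x::nat) \<in># M \<Longrightarrow> x \<le> sum_mset M"
  by (metis multi_member_split sum_mset.add_mset le_add1)

lemma sub_le_sum: "(M::nat multiset) \<subseteq># N \<Longrightarrow> sum_mset M \<le> sum_mset N"
  by (metis subset_mset.add_diff_inverse sum_mset.union le_add1)

lemma sub_notin: "M' \<subseteq># add_mset x R \<Longrightarrow> x \<notin># M' \<Longrightarrow> M' \<subseteq># R"
  by (metis diff_single_trivial mset_subset_eq_exists_conv add_mset_add_single subset_mset.add_diff_inverse
        subset_eq_diff_conv)

lemma sum_list_sum: "sum_mset (sum_list Ps) = sum_list (map sum_mset (Ps :: nat multiset list))"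
  by (induction Ps) auto

lemma sum_map_mset: "sum_mset (image_mset f (mset xs)) = sum_list (map f (xs :: 'a list)) "
  by (induction xs) auto

lemma step_empty:
  assumes "agg_step n A {#} M'" and "0 \<notin> A"
  shows "M' = {#1#}"
proof -
  from assms obtain Ps Rest where
    e1: "{#1#} = sum_list Ps + Rest" and
    pP: "\<forall>P \<in> set Ps. P \<noteq> {#} \<and> sum_mset P \<in> A" and
    e2: "M' = Rest + mset (map sum_mset Ps)"
    by (auto simp: agg_step_def merge_step_def)
  have s: "sum_mset M' = 1"
  proof -
    have "sum_mset {#1::nat#} = sum_mset (sum_list Ps + Rest)" by (simp only: e1)
    then show ?thesis using e2 by (simp add: sum_list_sum sum_map_mset)
  qed
  have r: "Rest \<subseteq># {#1#}" using e1 by simp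
  have z: "0 \<notin># M'"
  proof
    assume "0 \<in># M'"
    then have "0 \<in># Rest \<or> 0 \<in> sum_mset ` set Ps" using e2 by auto
    then show False
    proof
      assume "0 \<in># Rest" then show False using r mset_subset_eqD by fastforce
    next
      assume "0 \<in> sum_mset ` set Ps"
      then obtain P where "P \<in> set Ps" "sum_mset P = 0" by (metis imageE)
      then show False using pP assms(2) by metis
    qed
  qed
  have "M' \<noteq> {#}" using s by auto
  then obtain x R where m: "M' = add_mset x R" by (metis multiset_cases)
  have "x \<noteq> 0" using z m by auto
  moreover have "x + sum_mset R = 1" using s m by simp
  ultimately have "x = 1 \<and> sum_mset R = 0" by linarith
  then have "x = 1" "sum_mset R = 0" by blast+
  moreover have "0 \<notin># R" using z m by auto
  ultimately show ?thesis using m by (metis sum_mset_0_iff multiset_nonemptyE)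
qed

lemma inv_decomp:
  assumes "inv (Suc n) A M"
    and T: "\<And>M. inv n A M \<Longrightarrow> sum_mset M \<le> T"
    and c: "T + 1 \<le> c"
    and gap: "\<And>y. y \<in> A \<Longrightarrow> y \<le> c + T + 1 \<Longrightarrow> y \<le> c"
    and z: "0 \<notin> A"
  shows "M = {#} \<or> (\<exists>x R. M = add_mset x R \<and> inv n A R \<and> x \<le> c)"
  using assms(1)
proof (induction rule: inv.induct)
  case i0 then show ?case by simp
next
  case (istep M M')
  from istep.IH show ?case
  proof
    assume "M = {#}"
    then have "M' = {#1#}" using step_empty istep.hyps(2) z by blast
    then show ?thesis using c by (auto intro: inv.i0)
  next
    assume "\<exists>x R. M = add_mset x R \<and> inv n A R \<and> x \<le> c"
    then obtain x R where m: "M = add_mset x R" and ir: "inv n A R" and xc: "x \<le> c" by blast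
    have st: "agg_step (Suc n) A (add_mset x R) M'" using istep.hyps(2) m by simp

    have "(\<exists>R'. M' = add_mset x R' \<and> agg_step n A R R') \<or>
         (\<exists>G R2 R4. M' = add_mset (x + sum_mset G) R2 \<and> agg_step n A R R4 \<and> R2 \<subseteq># R4
            \<and> x + sum_mset G \<in> A \<and> sum_mset G \<le> sum_mset R + 1)" by (rule step_decomp[OF st])
    then show ?thesis
    proof
      assume "\<exists>R'. M' = add_mset x R' \<and> agg_step n A R R'"
      then show ?thesis using ir xc by (blast intro: inv.istep)
    next
      assume "\<exists>G R2 R4. M' = add_mset (x + sum_mset G) R2 \<and> agg_step n A R R4 \<and> R2 \<subseteq># R4
            \<and> x + sum_mset G \<in> A \<and> sum_mset G \<le> sum_mset R + 1"
      then obtain G R2 R4 where g: "M' = add_mset (x + sum_mset G) R2" "agg_step n A R R4" "R2 \<subseteq># R4"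
        "x + sum_mset G \<in> A" "sum_mset G \<le> sum_mset R + 1" by blast
      have "inv n A R4" using ir g(2) by (rule inv.istep)
      then have "inv n A R2" using g(3) by (rule inv.isub)
      moreover have "x + sum_mset G \<le> c"
      proof (rule gap)
        show "x + sum_mset G \<in> A" by (rule g(4))
        show "x + sum_mset G \<le> c + T + 1" using T[OF ir] g(5) xc by linarith
      qed
      ultimately show ?thesis using g(1) by blast
    qed
  qed
next
  case (isub M M')
  from isub.IH show ?case
  proof
    assume "M = {#}"
    then show ?thesis using isub.hyps(2) by simp
  next
    assume "\<exists>x R. M = add_mset x R \<and> inv n A R \<and> x \<le> c"
    then obtain x R where m: "M = add_mset x R" and ir: "inv n A R" and xc: "x \<le> c" by blast
    show ?thesis
    proof (cases "x \<in># M'")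
      case True
      then obtain R' where m': "M' = add_mset x R'" by (metis multi_member_split)
      have "R' \<subseteq># R" using isub.hyps(2) m m' by simp
      then have "inv n A R'" using ir inv.isub by blast
      then show ?thesis using m' xc by blast
    next
      case False
      then have sr: "M' \<subseteq># R" using isub.hyps(2) m sub_notin[of M' x R] by simp
      show ?thesis
      proof (cases "M' = {#}")
        case True then show ?thesis by simp
      next
        case False
        then obtain y R'' where m': "M' = add_mset y R''" by (metis multiset_cases)
        have yr: "y \<in># R \<and> R'' \<subset># R" using mset_subset_eq_insertD[of y R'' R] sr m' by simp
        then have "R'' \<subseteq># R" by (simp add: subset_mset.less_imp_le)
        then have "inv n A R''" using ir inv.isub by blast
        moreover have "y \<le> c" using yr mem_le_sum[of y R] T[OF ir] c by linarith
        ultimately show ?thesis using m' by blast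
      qed
    qed
  qed
qed

lemma inv_bounded:
  assumes inf: "infinite A" and gaps: "\<forall>B. \<exists>i. enumerate A (Suc i) - enumerate A i > B"
    and z: "0 \<notin> A"
  shows "\<exists>T. \<forall>M. inv n A M \<longrightarrow> sum_mset M \<le> T"
proof (induction n)
  case 0
  show ?case by (intro exI[of _ 0]) (auto dest: inv0)
next
  case (Suc n)
  then obtain T where T: "\<And>M. inv n A M \<Longrightarrow> sum_mset M \<le> T" by blast
  define B where "B = max (2*T+2) (enumerate A (T+1))"
  obtain i where gi: "enumerate A (Suc i) - enumerate A i > B" using gaps by blast
  define c where "c = enumerate A i"
  define d where "d = enumerate A (Suc i)"
  have gd: "d - c > B" using gi c_def d_def by simp
  have "d > enumerate A (T+1)" using gd B_def by linarith
  then have "Suc i > T + 1" using inf d_def by simp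
  then have c1: "T + 1 \<le> c" using le_enumerate[OF inf, of i] c_def by linarith
  have gap: "y \<le> c" if y: "y \<in> A" "y \<le> c + T + 1" for y
  proof -
    have yd: "y < d" using y(2) gd B_def by linarith
    obtain j where j: "enumerate A j = y" using enumerate_Ex[OF inf y(1)] by blast
    have "j < Suc i" using yd j d_def inf by (metis enumerate_mono_iff)
    then have "j \<le> i" by simp
    then show ?thesis using j c_def inf by (metis enumerate_mono_le_iff)
  qed
  have "\<forall>M. inv (Suc n) A M \<longrightarrow> sum_mset M \<le> c + T"
  proof (intro allI impI)
    fix M assume "inv (Suc n) A M"
    from inv_decomp[OF this T c1 gap z]
    show "sum_mset M \<le> c + T"
    proof
      assume "M = {#}" then show ?thesis by simp
    next
      assume "\<exists>x R. M = add_mset x R \<and> inv n A R \<and> x \<le> c"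
      then obtain x R where "M = add_mset x R" "inv n A R" "x \<le> c" by blast
      then show ?thesis using T[of R] by simp
    qed
  qed
  then show ?case by blast
qed

lemma reach_ones:
  assumes "agg_reachable n A {#x#}" and "k < n"
  shows "agg_reachable n A (add_mset x (replicate_mset k 1))"
  using assms(2)
proof (induction k)
  case 0 then show ?case using assms(1) by simp
next
  case (Suc k)
  then have r: "agg_reachable n A (add_mset x (replicate_mset k 1))" by simp
  have "agg_step n A (add_mset x (replicate_mset k 1)) (add_mset x (replicate_mset k 1) + {#1#})"
    unfolding agg_step_def merge_step_def using Suc.prems
    by (intro conjI exI[of _ "[]"] exI[of _ "add_mset x (replicate_mset k 1) + {#1#}"]) auto
  moreover have "add_mset x (replicate_mset k 1) + {#1#} = add_mset x (replicate_mset (Suc k) 1)" by simp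
  ultimately show ?case using agg_reachable.step[OF r] by metis
qed

lemma reach_next:
  assumes "agg_reachable n A {#x#}" and "1 \<le> g" "g < n" "x + g \<in> A"
  shows "agg_reachable n A {#x + g#}"
proof -
  have r: "agg_reachable n A (add_mset x (replicate_mset (g-1) 1))"
    using reach_ones[OF assms(1)] assms by simp
  let ?M = "add_mset x (replicate_mset (g-1) 1) + {#1#}"
  have sm: "sum_mset ?M = x + g" using assms(2) by simp
  have "agg_step n A (add_mset x (replicate_mset (g-1) 1)) {#sum_mset ?M#}"
    unfolding agg_step_def merge_step_def using assms sm
    by (intro conjI exI[of _ "[?M]"] exI[of _ "{#}"]) auto
  then show ?thesis using agg_reachable.step[OF r] sm by simp
qed

lemma single_inf:
  assumes inf: "infinite A" and one: "1 \<in> A" and z: "0 \<notin> A"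
    and bd: "\<And>i. enumerate A (Suc i) - enumerate A i \<le> B"
  shows "Single (Suc B) A = \<infinity>"
proof -
  have e0: "enumerate A 0 = 1"
  proof -
    have "(LEAST n. n \<in> A) = 1"
    proof (rule Least_equality)
      show "1 \<in> A" by (rule one)
      show "\<And>y. y \<in> A \<Longrightarrow> 1 \<le> y" using z by (metis less_one not_le)
    qed
    then show ?thesis by (simp add: enumerate_0)
  qed
  have all: "agg_reachable (Suc B) A {#enumerate A i#}" for i
  proof (induction i)
    case 0
    have "agg_step (Suc B) A {#} {#1#}"
      unfolding agg_step_def merge_step_def
      by (intro conjI exI[of _ "[]"] exI[of _ "{#1#}"]) auto
    then show ?case using agg_reachable.step[OF agg_reachable.init] e0 by simp
  next
    case (Suc i)
    define g where "g = enumerate A (Suc i) - enumerate A i"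
    have st: "enumerate A i < enumerate A (Suc i)" using enumerate_step[OF inf] by blast
    then have "1 \<le> g" "g < Suc B" using bd[of i] g_def by auto
    moreover have "enumerate A i + g = enumerate A (Suc i)" using st g_def by simp
    ultimately show ?case using reach_next[OF Suc.IH, of g] enumerate_in_set[OF inf, of "Suc i"] by simp
  qed
  have "{x \<in> A. agg_reachable (Suc B) A {#x#}} = A"
  proof (intro set_eqI iffI)
    fix y assume "y \<in> A"
    then obtain j where "enumerate A j = y" using enumerate_Ex[OF inf] by blast
    then show "y \<in> {x \<in> A. agg_reachable (Suc B) A {#x#}}" using all[of j] \<open>y \<in> A\<close> by simp
  qed simp
  moreover have "infinite (enat ` A)" using inf by (metis finite_imageD inj_on_def enat.inject)
  ultimately show ?thesis using one unfolding Single_def by (auto simp add: Sup_enat_def)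
qed

lemma sup_le_enat: "(\<And>x. x \<in> S \<Longrightarrow> x \<le> T) \<Longrightarrow> Sup (enat ` S) \<noteq> \<infinity>"
proof -
  assume "\<And>x. x \<in> S \<Longrightarrow> x \<le> T"
  then have "Sup (enat ` S) \<le> enat T" by (auto intro!: Sup_least)
  then show ?thesis by (metis infinity_ileE)
qed

theorem mainTheorem8:
  fixes A :: "nat set"
  assumes "infinite A" and "1 \<in> A" and "0 \<notin> A"
  shows "(\<forall>n \<ge> 1. Single n A \<noteq> \<infinity> \<and> Total n A \<noteq> \<infinity>) \<longleftrightarrow>
         (\<forall>B. \<exists>i. enumerate A (Suc i) - enumerate A i > B)"
proof
  assume L: "\<forall>n \<ge> 1. Single n A \<noteq> \<infinity> \<and> Total n A \<noteq> \<infinity>"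
  show "\<forall>B. \<exists>i. enumerate A (Suc i) - enumerate A i > B"
  proof (rule ccontr)
    assume "\<not> (\<forall>B. \<exists>i. enumerate A (Suc i) - enumerate A i > B)"
    then obtain B where "\<And>i. enumerate A (Suc i) - enumerate A i \<le> B" by (auto simp: not_less)
    from single_inf[OF assms this] L show False by auto
  qed
next
  assume R: "\<forall>B. \<exists>i. enumerate A (Suc i) - enumerate A i > B"
  show "\<forall>n \<ge> 1. Single n A \<noteq> \<infinity> \<and> Total n A \<noteq> \<infinity>"
  proof (intro allI impI)
    fix n :: nat
    obtain T where T: "\<And>M. inv n A M \<Longrightarrow> sum_mset M \<le> T"
      using inv_bounded[OF assms(1) R assms(3), of n] by blast
    have "Total n A \<noteq> \<infinity>"
    proof -
      have "(\<lambda>M. enat (sum_mset M)) ` {M. agg_reachable n A M} = enat ` (sum_mset ` {M. agg_reachable n A M})"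
        by auto
      moreover have "Sup (enat ` (sum_mset ` {M. agg_reachable n A M})) \<noteq> \<infinity>"
        by (rule sup_le_enat[of _ T]) (auto intro: T reach_inv)
      ultimately show ?thesis unfolding Total_def by simp
    qed
    moreover have "Single n A \<noteq> \<infinity>"
      unfolding Single_def
      by (rule sup_le_enat[of _ T]) (auto dest!: reach_inv T)
    ultimately show "Single n A \<noteq> \<infinity> \<and> Total n A \<noteq> \<infinity>" by blast
  qed
qed

end
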